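(* Let $A\subseteq\mathbb{Z}_N$ be a $B_t[N;1]$ set which contains $0$, and let $S\triangleq A\setminus\{0\}$. Then $\mathbb{Z}_N \ge \{1\} \diamond_t S$.
   Context: A subset $A\subseteq\mathbb{Z}_N$ is a $B_t[N;1]$ set if the sums of any $t$ (not necessarily distinct) elements of $A$ are all different modulo $N$, i.e., distinct multisets of $t$ elements of $A$ have distinct sums in $\mathbb{Z}_N$. For a finite Abelian group $G$, a finite set $M\subseteq\mathbb{Z}\setminus\{0\}$ and $S=\{s_1,\dots,s_n\}\subseteq G$, we write $G\ge M\diamond_t S$ (“$M$ partially $t$-splits $G$ with splitter set $S$”) if the elements $\mathbf{e}\cdot(s_1,\dots,s_n)=\sum_i e_is_i$, over all $\mathbf{e}\in(M\cup\{0\})^n$ with $1\le\mathrm{wt}(\mathbf{e})\le t$, are all distinct and non-zero in $G$. Here $e_is_i$ denotes the $e_i$-fold group multiple and $\mathrm{wt}$ is the Hamming weight. *)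

theory Defs
  imports Main "HOL-Library.Multiset"
begin

text \<open>Elements of Z_N are represented by integers in {0..<N}; equality in Z_N
is congruence mod N.\<close>

definition ZN :: "int \<Rightarrow> int set" where
  "ZN N = {0..<N}"

definition Bt_set :: "nat \<Rightarrow> int \<Rightarrow> int set \<Rightarrow> bool" where
  "Bt_set t N A \<longleftrightarrow> A \<subseteq> ZN N \<and>
     (\<forall>M1 M2. set_mset M1 \<subseteq> A \<longrightarrow> set_mset M2 \<subseteq> A \<longrightarrow> size M1 = t \<longrightarrow> size M2 = t \<longrightarrow>
        sum_mset M1 mod N = sum_mset M2 mod N \<longrightarrow> M1 = M2)"

definition coeff_vecs :: "int set \<Rightarrow> nat \<Rightarrow> int set \<Rightarrow> (int \<Rightarrow> int) set" where
  "coeff_vecs M t S = {e. (\<forall>s\<in>S. e s \<in> M \<union> {0}) \<and> (\<forall>s. s \<notin> S \<longrightarrow> e s = 0)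
      \<and> 1 \<le> card {s\<in>S. e s \<noteq> 0} \<and> card {s\<in>S. e s \<noteq> 0} \<le> t}"

text \<open>Z_N \<ge> M \<diamond>_t S: the sums e\<cdot>s over all such e are pairwise distinct and nonzero in Z_N.\<close>
definition partial_split :: "int \<Rightarrow> int set \<Rightarrow> nat \<Rightarrow> int set \<Rightarrow> bool" where
  "partial_split N M t S \<longleftrightarrow> S \<subseteq> ZN N \<and> finite S \<and> 0 \<notin> M \<and>
     inj_on (\<lambda>e. (\<Sum>s\<in>S. e s * s) mod N) (coeff_vecs M t S) \<and>
     (\<forall>e\<in>coeff_vecs M t S. (\<Sum>s\<in>S. e s * s) mod N \<noteq> 0)"

end

theory Submission
  imports Defs
begin

theorem theorem8:
  fixes N :: int and t :: nat and A :: "int set"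
  assumes "0 < N"
    and "Bt_set t N A"
    and "0 \<in> A"
  shows "partial_split N {1} t (A - {0})"
proof -
  define S where "S = A - {0}"
  have AZ: "A \<subseteq> {0..<N}" using assms(2) by (simp add: Bt_set_def ZN_def)
  have B: "\<And>M1 M2. set_mset M1 \<subseteq> A \<Longrightarrow> set_mset M2 \<subseteq> A \<Longrightarrow> size M1 = t \<Longrightarrow> size M2 = t \<Longrightarrow>
        sum_mset M1 mod N = sum_mset M2 mod N \<Longrightarrow> M1 = M2"
    using assms(2) by (simp add: Bt_set_def)
  have finA: "finite A" using AZ finite_subset by blast
  have finS: "finite S" using finA S_def by simp
  define T where "T e = {s\<in>S. e s \<noteq> (0::int)}" for e :: "int \<Rightarrow> int"
  define Mu where "Mu e = mset_set (T e) + replicate_mset (t - card (T e)) (0::int)" for e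
  have finT: "finite (T e)" for e using finS by (simp add: T_def)
  have TS: "T e \<subseteq> S" for e by (auto simp: T_def)
  have setMu: "set_mset (Mu e) \<subseteq> A" for e
    using finT[of e] TS[of e] assms(3) by (auto simp: Mu_def S_def)
  have sizeMu: "e \<in> coeff_vecs {1} t S \<Longrightarrow> size (Mu e) = t" for e
    unfolding Mu_def coeff_vecs_def T_def by auto
  have cntMu: "s \<noteq> 0 \<Longrightarrow> count (Mu e) s = (if s \<in> T e then 1 else 0)" for e s
    using finT[of e] by (simp add: Mu_def)
  have sumMu: "e \<in> coeff_vecs {1} t S \<Longrightarrow> sum_mset (Mu e) = (\<Sum>s\<in>S. e s * s)" for e
  proof -
    assume e: "e \<in> coeff_vecs {1} t S"
    have "sum_mset (Mu e) = (\<Sum>s\<in>T e. s)" using finT[of e] by (simp add: Mu_def sum_unfold_sum_mset)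
    also have "\<dots> = (\<Sum>s\<in>S. e s * s)"
    proof -
      have "(\<Sum>s\<in>S. e s * s) = (\<Sum>s\<in>T e. e s * s)"
        by (rule sum.mono_neutral_right[OF finS TS]) (auto simp: T_def)
      also have "\<dots> = (\<Sum>s\<in>T e. s)"
        using e by (intro sum.cong) (auto simp: T_def coeff_vecs_def)
      finally show ?thesis by simp
    qed
    finally show ?thesis .
  qed
  have eqT: "e1 \<in> coeff_vecs {1} t S \<Longrightarrow> e2 \<in> coeff_vecs {1} t S \<Longrightarrow> T e1 = T e2 \<Longrightarrow> e1 = e2" for e1 e2
  proof
    fix s
    assume e1: "e1 \<in> coeff_vecs {1} t S" and e2: "e2 \<in> coeff_vecs {1} t S" and "T e1 = T e2"
    hence "(s \<in> S \<and> e1 s \<noteq> 0) = (s \<in> S \<and> e2 s \<noteq> 0)" by (auto simp: T_def set_eq_iff)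
    show "e1 s = e2 s"
    proof (cases "s \<in> S")
      case True
      have a: "e1 s = 0 \<or> e1 s = 1" "e2 s = 0 \<or> e2 s = 1" using e1 e2 True by (auto simp: coeff_vecs_def)
      show ?thesis using a True \<open>(s \<in> S \<and> e1 s \<noteq> 0) = (s \<in> S \<and> e2 s \<noteq> 0)\<close> by auto
    next
      case False
      then show ?thesis using e1 e2 by (simp add: coeff_vecs_def)
    qed
  qed
  have MuT: "Mu e1 = Mu e2 \<Longrightarrow> T e1 = T e2" for e1 e2
  proof -
    assume h: "Mu e1 = Mu e2"
    show ?thesis
    proof
      show "T e1 \<subseteq> T e2"
      proof
        fix s assume s: "s \<in> T e1"
        have "s \<noteq> 0" using s TS S_def by auto
        then have c: "count (Mu e2) s = (if s \<in> T e2 then 1 else 0)" "count (Mu e1) s = 1"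
          using cntMu[of s e1] cntMu[of s e2] s by simp_all
        then show "s \<in> T e2" using h by (cases "s \<in> T e2") simp_all
      qed
      show "T e2 \<subseteq> T e1"
      proof
        fix s assume s: "s \<in> T e2"
        have "s \<noteq> 0" using s TS S_def by auto
        then have c: "count (Mu e1) s = (if s \<in> T e1 then 1 else 0)" "count (Mu e2) s = 1"
          using cntMu[of s e1] cntMu[of s e2] s by simp_all
        then show "s \<in> T e1" using h by (cases "s \<in> T e1") simp_all
      qed
    qed
  qed
  have inj: "inj_on (\<lambda>e. (\<Sum>s\<in>S. e s * s) mod N) (coeff_vecs {1} t S)"
  proof (rule inj_onI)
    fix e1 e2 assume e1: "e1 \<in> coeff_vecs {1} t S" and e2: "e2 \<in> coeff_vecs {1} t S"
      and h: "(\<Sum>s\<in>S. e1 s * s) mod N = (\<Sum>s\<in>S. e2 s * s) mod N"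
    have "Mu e1 = Mu e2"
      using B[OF setMu setMu sizeMu[OF e1] sizeMu[OF e2]] h sumMu[OF e1] sumMu[OF e2] by simp
    then show "e1 = e2" using eqT[OF e1 e2] MuT by blast
  qed
  have nz: "\<forall>e\<in>coeff_vecs {1} t S. (\<Sum>s\<in>S. e s * s) mod N \<noteq> 0"
  proof
    fix e assume e: "e \<in> coeff_vecs {1} t S"
    show "(\<Sum>s\<in>S. e s * s) mod N \<noteq> 0"
    proof
      assume h: "(\<Sum>s\<in>S. e s * s) mod N = 0"
      have "set_mset (replicate_mset t (0::int)) \<subseteq> A" using assms(3) by auto
      then have Mz: "Mu e = replicate_mset t 0"
        using B[OF setMu _ sizeMu[OF e]] h sumMu[OF e] by simp
      have "card (T e) \<ge> 1" using e unfolding coeff_vecs_def T_def by blast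
      then have "T e \<noteq> {}" by (cases "T e = {}") simp_all
      then obtain s where s: "s \<in> T e" by blast
      have "s \<noteq> 0" using s TS S_def by auto
      then show False using cntMu[of s e] Mz s by simp
    qed
  qed
  have "S \<subseteq> ZN N" using AZ by (auto simp: S_def ZN_def)
  then show ?thesis using inj nz finS unfolding partial_split_def S_def by simp
qed

end
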